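(* Two quadruplets $(\Phi_1,\Phi_2,\Phi_3,\Phi_{123})$ and $(\Phi_{23},\Phi_{13},\Phi_{12},\Phi)$ of (generic) complex numbers can be regarded as the vertices of two reciprocal $(4,6)$ configurations (with the vertex correspondence described in the context) if and only if $$Q(\Phi_1,\Phi_2,\Phi_3,\Phi_{123})=Q(\Phi_{23},\Phi_{13},\Phi_{12},\Phi).$$
   Context: The plane is identified with $\mathbb{C}$; $Q(P_1,P_2,P_3,P_4)=\frac{(P_1-P_2)(P_3-P_4)}{(P_2-P_3)(P_4-P_1)}$ is the cross-ratio. A $(4,6)$ configuration consists of four points of the plane, each pair of which is joined by a circular arc (generalized circles, i.e. circles or lines, allowed), such that the circular extensions of all six arcs pass through one common point $\Phi_*$ (possibly $\infty$, in which case all arcs are straight segments). Equivalently, a $(4,6)$ configuration is the image under a Möbius transformation of four points joined pairwise by six straight segments. For the two quadruplets, the arcs correspond as follows: $\{\Phi_1,\Phi_2\}\leftrightarrow\{\Phi,\Phi_{12}\}$, $\{\Phi_2,\Phi_3\}\leftrightarrow\{\Phi,\Phi_{23}\}$, $\{\Phi_3,\Phi_1\}\leftrightarrow\{\Phi,\Phi_{13}\}$, $\{\Phi_1,\Phi_{123}\}\leftrightarrow\{\Phi_{13},\Phi_{12}\}$, $\{\Phi_2,\Phi_{123}\}\leftrightarrow\{\Phi_{12},\Phi_{23}\}$, $\{\Phi_3,\Phi_{123}\}\leftrightarrow\{\Phi_{23},\Phi_{13}\}$. Two $(4,6)$ configurations (with common points $\Phi_*$ and $\Phi_*'$) are reciprocally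 related if the six angles made by the arcs of one configuration equal those made by the corresponding arcs of the other; equivalently, if there are Möbius transformations sending $\Phi_*$ and $\Phi_*'$ to $\infty$ such that the resulting two four-point/six-segment figures, after a rotation of one of them, have all corresponding segments parallel, i.e. form reciprocal triangles $\Delta(\Phi_{23},\Phi_{13},\Phi_{12})$, $\Delta(\Phi_1,\Phi_2,\Phi_3)$ with interior points $\Phi$, $\Phi_{123}$ (edges $(\Phi_1,\Phi_2),(\Phi_2,\Phi_3),(\Phi_3,\Phi_1)$ parallel to $(\Phi,\Phi_{12}),(\Phi,\Phi_{23}),(\Phi,\Phi_{13})$, and $(\Phi_1,\Phi_{123}),(\Phi_2,\Phi_{123}),(\Phi_3,\Phi_{123})$ parallel to $(\Phi_{13},\Phi_{12}),(\Phi_{12},\Phi_{23}),(\Phi_{23},\Phi_{13})$). Usual reciprocal triangles are the special case where all arcs are straight. *)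

theory Defs
  imports "HOL-Analysis.Analysis"
begin

definition cross_ratio :: "complex \<Rightarrow> complex \<Rightarrow> complex \<Rightarrow> complex \<Rightarrow> complex" where
  "cross_ratio P1 P2 P3 P4 = ((P1 - P2) * (P3 - P4)) / ((P2 - P3) * (P4 - P1))"

definition moebius :: "complex \<Rightarrow> complex \<Rightarrow> complex \<Rightarrow> complex \<Rightarrow> complex \<Rightarrow> complex" where
  "moebius a b c d z = (a * z + b) / (c * z + d)"

definition moebius_nondeg :: "complex \<Rightarrow> complex \<Rightarrow> complex \<Rightarrow> complex \<Rightarrow> bool" where
  "moebius_nondeg a b c d \<longleftrightarrow> a * d - b * c \<noteq> 0"

definition parallel_seg :: "complex \<Rightarrow> complex \<Rightarrow> complex \<Rightarrow> complex \<Rightarrow> bool" where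
  "parallel_seg z1 z2 w1 w2 \<longleftrightarrow> Im ((z1 - z2) * cnj (w1 - w2)) = 0"

text \<open>The quadruplets (P1,P2,P3,P123) and (F23,F13,F12,F) are the vertices of two
  reciprocally related (4,6) configurations: there are Moebius transformations sending
  the common points of the two configurations to infinity (and the vertices to finite
  points), such that after a rotation of the first image figure all corresponding
  segments are parallel, with the arc correspondence
  {P1,P2}~{F,F12}, {P2,P3}~{F,F23}, {P3,P1}~{F,F13},
  {P1,P123}~{F13,F12}, {P2,P123}~{F12,F23}, {P3,P123}~{F23,F13}.\<close>
definition reciprocal_46 ::
  "complex \<Rightarrow> complex \<Rightarrow> complex \<Rightarrow> complex \<Rightarrow> complex \<Rightarrow> complex \<Rightarrow> complex \<Rightarrow> complex \<Rightarrow> bool" where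
  "reciprocal_46 P1 P2 P3 P123 F23 F13 F12 F \<longleftrightarrow>
     (\<exists>a b c d a' b' c' d' u.
        moebius_nondeg a b c d \<and> moebius_nondeg a' b' c' d' \<and> norm u = 1 \<and>
        (\<forall>z\<in>{P1, P2, P3, P123}. c * z + d \<noteq> 0) \<and>
        (\<forall>z\<in>{F23, F13, F12, F}. c' * z + d' \<noteq> 0) \<and>
        (let p = (\<lambda>z. u * moebius a b c d z); q = moebius a' b' c' d' in
           parallel_seg (p P1) (p P2) (q F) (q F12) \<and>
           parallel_seg (p P2) (p P3) (q F) (q F23) \<and>
           parallel_seg (p P3) (p P1) (q F) (q F13) \<and>
           parallel_seg (p P1) (p P123) (q F13) (q F12) \<and>
           parallel_seg (p P2) (p P123) (q F12) (q F23) \<and>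
           parallel_seg (p P3) (p P123) (q F23) (q F13)))"

end

theory Submission
  imports Defs
begin


lemma par_real:
  assumes "Im (cnj X * Y) = 0" "X \<noteq> 0"
  shows "\<exists>t::real. Y = of_real t * X"
proof -
  have "Im (Y / X) = 0" using assms
    by (simp add: Im_divide algebra_simps)
  then have "Y / X = of_real (Re (Y / X))" by (simp add: complex_eq_iff)
  then have "Y = of_real (Re (Y / X)) * X" using assms(2)
    by (metis nonzero_divide_eq_eq)
  then show ?thesis by blast
qed

lemma par_seg_real:
  assumes "parallel_seg z1 z2 w1 w2" "z1 \<noteq> z2"
  shows "\<exists>t::real. w1 - w2 = of_real t * (z1 - z2)"
proof -
  have "Im (cnj (z1 - z2) * (w1 - w2)) = 0" using assms(1)
    unfolding parallel_seg_def by (simp add: algebra_simps)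
  from par_real[OF this] assms(2) show ?thesis by simp
qed

lemma moeb_diff:
  assumes "c*z + d \<noteq> 0" "c*w + d \<noteq> 0"
  shows "moebius a b c d z - moebius a b c d w = (a*d - b*c) * (z - w) / ((c*z+d)*(c*w+d))"
  using assms unfolding moebius_def by (simp add: field_simps)

lemma moeb_inj:
  assumes "moebius_nondeg a b c d" "c*z + d \<noteq> 0" "c*w + d \<noteq> 0" "z \<noteq> w"
  shows "moebius a b c d z \<noteq> moebius a b c d w"
  using moeb_diff[OF assms(2,3), of a b] assms unfolding moebius_nondeg_def by auto

lemma moeb_cr:
  assumes "moebius_nondeg a b c d" "c*z1 + d \<noteq> 0" "c*z2 + d \<noteq> 0" "c*z3 + d \<noteq> 0" "c*z4 + d \<noteq> 0"
  shows "cross_ratio (moebius a b c d z1) (moebius a b c d z2) (moebius a b c d z3) (moebius a b c d z4)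
        = cross_ratio z1 z2 z3 z4"
proof -
  let ?D = "a*d - b*c"
  have D: "?D \<noteq> 0" using assms(1) unfolding moebius_nondeg_def .
  let ?k = "?D * ?D / ((c*z1+d)*(c*z2+d)*(c*z3+d)*(c*z4+d))"
  have k: "?k \<noteq> 0" using D assms by simp
  have "cross_ratio (moebius a b c d z1) (moebius a b c d z2) (moebius a b c d z3) (moebius a b c d z4)
     = (?k * ((z1 - z2) * (z3 - z4))) / (?k * ((z2 - z3) * (z4 - z1)))"
  proof -
    have n: "(moebius a b c d z1 - moebius a b c d z2) * (moebius a b c d z3 - moebius a b c d z4)
       = ?k * ((z1 - z2) * (z3 - z4))"
      using assms by (simp add: moeb_diff field_simps)
    have m: "(moebius a b c d z2 - moebius a b c d z3) * (moebius a b c d z4 - moebius a b c d z1)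
       = ?k * ((z2 - z3) * (z4 - z1))"
      using assms by (simp add: moeb_diff field_simps)
    show ?thesis unfolding cross_ratio_def n m ..
  qed
  also have "\<dots> = cross_ratio z1 z2 z3 z4"
    unfolding cross_ratio_def using k by simp
  finally show ?thesis .
qed



lemma moeb_exists:
  assumes dz: "distinct [z1,z2,z3,z4]" and dw: "distinct [w1,w2,w3,w4]"
    and cr: "cross_ratio z1 z2 z3 z4 = cross_ratio w1 w2 w3 w4"
  shows "\<exists>a b c d. moebius_nondeg a b c d \<and> (\<forall>z\<in>{z1,z2,z3,z4}. c*z+d \<noteq> 0) \<and>
     moebius a b c d z1 = w1 \<and> moebius a b c d z2 = w2 \<and> moebius a b c d z3 = w3 \<and> moebius a b c d z4 = w4"
proof -
  define A1 where "A1 = z2-z3"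
  define B1 where "B1 = -z1*(z2-z3)"
  define C1 where "C1 = z2-z1"
  define D1 where "D1 = -z3*(z2-z1)"
  define A2 where "A2 = w2-w3"
  define B2 where "B2 = -w1*(w2-w3)"
  define C2 where "C2 = w2-w1"
  define D2 where "D2 = -w3*(w2-w1)"
  define a where "a = D2*A1 - B2*C1"
  define b where "b = D2*B1 - B2*D1"
  define c where "c = A2*C1 - C2*A1"
  define d where "d = A2*D1 - C2*B1"
  have det: "a*d - b*c = (A2*D2 - B2*C2)*(A1*D1 - B1*C1)"
    unfolding a_def b_def c_def d_def by algebra
  have "A2*D2 - B2*C2 = (w2-w3)*(w2-w1)*(w1-w3)"
    unfolding A2_def B2_def C2_def D2_def by algebra
  moreover have "A1*D1 - B1*C1 = (z2-z3)*(z2-z1)*(z1-z3)"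
    unfolding A1_def B1_def C1_def D1_def by algebra
  ultimately have nd: "moebius_nondeg a b c d" unfolding moebius_nondeg_def det
    using dz dw by auto
  have cz: "c*z+d = (w2-w3)*(z2-z1)*(z-z3) - (w2-w1)*(z2-z3)*(z-z1)" for z
    unfolding c_def d_def A1_def B1_def C1_def D1_def A2_def B2_def C2_def D2_def by algebra
  have az: "a*z+b = w1*(w2-w3)*(z2-z1)*(z-z3) - w3*(w2-w1)*(z2-z3)*(z-z1)" for z
    unfolding a_def b_def A1_def B1_def C1_def D1_def A2_def B2_def C2_def D2_def by algebra
  have c1: "c*z1+d \<noteq> 0" unfolding cz using dz dw by auto
  have c2: "c*z2+d \<noteq> 0"
  proof -
    have "c*z2+d = (w1-w3)*(z2-z1)*(z2-z3)" unfolding cz by algebra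
    then show ?thesis using dz dw by auto
  qed
  have c3: "c*z3+d \<noteq> 0" unfolding cz using dz dw by auto
  have key: "(z2-z3)*(z4-z1)*(w4-w3)*(w2-w1) = (z2-z1)*(z4-z3)*(w4-w1)*(w2-w3)"
  proof -
    have nz: "(z2-z3)*(z4-z1) \<noteq> 0" "(w2-w3)*(w4-w1) \<noteq> 0" using dz dw by auto
    from cr have "(z1-z2)*(z3-z4) * ((w2-w3)*(w4-w1)) = (w1-w2)*(w3-w4) * ((z2-z3)*(z4-z1))"
      unfolding cross_ratio_def using nz by (simp add: field_simps)
    then show ?thesis by algebra
  qed
  have c4: "c*z4+d \<noteq> 0"
  proof
    assume h: "c*z4+d = 0"
    have "(z2-z3)*(z4-z1)*(w4-w3)*(w2-w1) = (z2-z3)*(z4-z1)*(w4-w1)*(w2-w1)"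
    proof -
      from h have "(w2-w3)*(z2-z1)*(z4-z3) = (w2-w1)*(z2-z3)*(z4-z1)" unfolding cz by simp
      then have "(z2-z1)*(z4-z3)*(w4-w1)*(w2-w3) = (z2-z3)*(z4-z1)*(w4-w1)*(w2-w1)"
        by (metis mult.commute mult.left_commute)
      with key show ?thesis by simp
    qed
    then have "(z2-z3)*(z4-z1)*(w2-w1) * ((w4-w3) - (w4-w1)) = 0" by algebra
    then show False using dz dw by auto
  qed
  have "a*z1+b = w1*(c*z1+d)" unfolding az cz by algebra
  then have m1: "moebius a b c d z1 = w1" unfolding moebius_def using c1
    by (simp add: divide_eq_eq)
  have "a*z2+b = w2*(c*z2+d)" unfolding az cz by algebra
  then have m2: "moebius a b c d z2 = w2" unfolding moebius_def using c2
    by (simp add: divide_eq_eq)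
  have "a*z3+b = w3*(c*z3+d)" unfolding az cz by algebra
  then have m3: "moebius a b c d z3 = w3" unfolding moebius_def using c3
    by (simp add: divide_eq_eq)
  have m4: "moebius a b c d z4 = w4" unfolding moebius_def using c4
    apply (simp add: divide_eq_eq)
    unfolding az cz using key by algebra
  show ?thesis using nd c1 c2 c3 c4 m1 m2 m3 m4 by blast
qed



lemma collinear_cr_real:
  assumes "v1 \<noteq> 0" "v2 \<noteq> 0" "v3 \<noteq> 0"
    and "Im (cnj v1 * v2) = 0" "Im (cnj v2 * v3) = 0"
  shows "Im (cross_ratio (v1 + x4) (v2 + x4) (v3 + x4) x4) = 0"
proof -
  obtain s where s: "v2 = of_real s * v1" using par_real assms by blast
  obtain t where t: "v3 = of_real t * v2" using par_real assms by blast
  have "cross_ratio (v1 + x4) (v2 + x4) (v3 + x4) x4 = ((v1 - v2) * v3) / ((v2 - v3) * (- v1))"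
    unfolding cross_ratio_def by (simp add: algebra_simps)
  also have "\<dots> = (of_real ((1 - s) * (t * s)) * (v1 * v1)) / (of_real (t * s - s) * (v1 * v1))"
    unfolding s t by (simp add: algebra_simps)
  also have "\<dots> = of_real (((1 - s) * (t * s)) / (t * s - s))"
    using assms(1) by simp
  finally show ?thesis by simp
qed

lemma core:
  assumes dx: "distinct [x1,x2,x3,x4]" and dy: "distinct [y23,y13,y12,y]"
    and nr: "Im (cross_ratio x1 x2 x3 x4) \<noteq> 0"
    and h1: "parallel_seg x1 x2 y y12" and h2: "parallel_seg x2 x3 y y23"
    and h3: "parallel_seg x3 x1 y y13" and h4: "parallel_seg x1 x4 y13 y12"
    and h5: "parallel_seg x2 x4 y12 y23" and h6: "parallel_seg x3 x4 y23 y13"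
  shows "cross_ratio x1 x2 x3 x4 = cross_ratio y23 y13 y12 y"
proof -
  obtain a where ea: "y - y12 = of_real a * (x1 - x2)" using par_seg_real[OF h1] dx by auto
  obtain b where eb: "y - y23 = of_real b * (x2 - x3)" using par_seg_real[OF h2] dx by auto
  obtain c where ec: "y - y13 = of_real c * (x3 - x1)" using par_seg_real[OF h3] dx by auto
  obtain d where ed: "y13 - y12 = of_real d * (x1 - x4)" using par_seg_real[OF h4] dx by auto
  obtain e where ee: "y12 - y23 = of_real e * (x2 - x4)" using par_seg_real[OF h5] dx by auto
  obtain f where ef: "y23 - y13 = of_real f * (x3 - x4)" using par_seg_real[OF h6] dx by auto
  have a0: "a \<noteq> 0" using ea dy by auto
  have b0: "b \<noteq> 0" using eb dy by auto
  have c0: "c \<noteq> 0" using ec dy by auto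
  have d0: "d \<noteq> 0" using ed dy by auto
  have f0: "f \<noteq> 0" using ef dy by auto
  define v1 where "v1 = x1 - x4"
  define v2 where "v2 = x2 - x4"
  define v3 where "v3 = x3 - x4"
  have v0: "v1 \<noteq> 0" "v2 \<noteq> 0" "v3 \<noteq> 0" using dx unfolding v1_def v2_def v3_def by auto
  define K1 where "K1 = a + c - d"
  define K3 where "K3 = b + c - f"
  have E1: "of_real K1 * v1 = of_real a * v2 + of_real c * v3"
  proof -
    have "of_real d * (x1 - x4) = of_real a * (x1 - x2) - of_real c * (x3 - x1)"
      using ea ec ed by algebra
    then show ?thesis unfolding K1_def v1_def v2_def v3_def by (simp add: algebra_simps)
  qed
  have E3: "of_real K3 * v3 = of_real c * v1 + of_real b * v2"
  proof -
    have "of_real f * (x3 - x4) = of_real c * (x3 - x1) - of_real b * (x2 - x3)"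
      using eb ec ef by algebra
    then show ?thesis unfolding K3_def v1_def v2_def v3_def by (simp add: algebra_simps)
  qed
  define p where "p = Im (cnj v1 * v2)"
  define q where "q = Im (cnj v2 * v3)"
  define r where "r = Im (cnj v3 * v1)"
  have E1r: "K1 * Re v1 = a * Re v2 + c * Re v3" "K1 * Im v1 = a * Im v2 + c * Im v3"
    using arg_cong[OF E1, of Re] arg_cong[OF E1, of Im] by simp_all
  have E3r: "K3 * Re v3 = c * Re v1 + b * Re v2" "K3 * Im v3 = c * Im v1 + b * Im v2"
    using arg_cong[OF E3, of Re] arg_cong[OF E3, of Im] by simp_all
  have br: "Im (cnj u * w) = Re u * Im w - Im u * Re w" for u w by simp
  have i: "- K1 * r = a * q" unfolding q_def r_def br using E1r by algebra
  have ii: "K1 * p = - c * q" unfolding p_def q_def br using E1r by algebra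
  have iii: "K3 * r = - b * p" unfolding p_def r_def br using E3r by algebra
  have iv: "- K3 * q = c * p" unfolding p_def q_def br using E3r by algebra
  have pq: "p \<noteq> 0 \<and> q \<noteq> 0"
  proof (rule ccontr)
    assume "\<not> (p \<noteq> 0 \<and> q \<noteq> 0)"
    then have "p = 0 \<and> q = 0" using ii iv c0 by auto
    then have "Im (cross_ratio (v1 + x4) (v2 + x4) (v3 + x4) x4) = 0"
      using collinear_cr_real v0 unfolding p_def q_def by blast
    then show False using nr unfolding v1_def v2_def v3_def by simp
  qed
  have ap: "a * p = c * r"
  proof -
    have "a * q * p = c * r * q" using i ii by algebra
    then show ?thesis using pq by (simp add: algebra_simps)
  qed
  have bq: "b * q = c * r"
  proof -
    have "b * p * q = c * r * p" using iii iv by algebra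
    then show ?thesis using pq by (simp add: algebra_simps)
  qed
  have afbd: "a * f = b * d"
  proof -
    have "(a * f - b * d) * (p * q) = 0"
      using ap bq ii iv unfolding K1_def K3_def by algebra
    then show ?thesis using pq by simp
  qed
  have "cross_ratio y23 y13 y12 y = (of_real f * v3 * (- of_real a * (x1 - x2))) / (of_real d * v1 * (of_real b * (x2 - x3)))"
    unfolding cross_ratio_def v1_def v3_def
    by (metis ea eb ed ef minus_diff_eq mult_minus_left)
  also have "\<dots> = of_real (a * f) * ((x1 - x2) * v3) / (of_real (b * d) * ((x2 - x3) * (- v1)))"
  proof -
    have n: "of_real f * v3 * (- of_real a * (x1 - x2)) = - (of_real (a * f) * ((x1 - x2) * v3))"
      by (simp add: algebra_simps)
    have m: "of_real d * v1 * (of_real b * (x2 - x3)) = - (of_real (b * d) * ((x2 - x3) * (- v1)))"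
      by (simp add: algebra_simps)
    show ?thesis unfolding n m minus_divide_divide ..
  qed
  also have "\<dots> = (x1 - x2) * v3 / ((x2 - x3) * (- v1))"
    unfolding afbd using b0 d0 by simp
  also have "\<dots> = cross_ratio x1 x2 x3 x4" unfolding cross_ratio_def v1_def v3_def by simp
  finally show ?thesis by simp
qed



lemma par_of_real:
  assumes "w1 - w2 = of_real t * (z1 - z2)"
  shows "parallel_seg z1 z2 w1 w2"
proof -
  have "Im ((z1 - z2) * cnj (of_real t * (z1 - z2))) = 0" by (simp add: algebra_simps)
  then show ?thesis unfolding parallel_seg_def using assms by simp
qed

lemma construct:
  fixes x1 x2 x3 x4 :: complex
  defines "p \<equiv> Im (cnj (x1 - x4) * (x2 - x4))"
    and "q \<equiv> Im (cnj (x2 - x4) * (x3 - x4))"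
    and "r \<equiv> Im (cnj (x3 - x4) * (x1 - x4))"
  assumes p0: "p \<noteq> 0" and q0: "q \<noteq> 0" and r0: "r \<noteq> 0" and A0: "p + q + r \<noteq> 0"
  defines "y \<equiv> 0"
    and "y12 \<equiv> - of_real (q * r) * (x1 - x2)"
    and "y23 \<equiv> - of_real (p * r) * (x2 - x3)"
    and "y13 \<equiv> - of_real (p * q) * (x3 - x1)"
  shows "distinct [x1,x2,x3,x4] \<and> distinct [y23,y13,y12,y] \<and>
     parallel_seg x1 x2 y y12 \<and> parallel_seg x2 x3 y y23 \<and>
     parallel_seg x3 x1 y y13 \<and> parallel_seg x1 x4 y13 y12 \<and>
     parallel_seg x2 x4 y12 y23 \<and> parallel_seg x3 x4 y23 y13"
proof -
  have dx: "distinct [x1,x2,x3,x4]" using p0 q0 r0 unfolding p_def q_def r_def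
    by (auto simp: algebra_simps)
  have e1: "y - y12 = of_real (q * r) * (x1 - x2)" unfolding y_def y12_def by simp
  have e2: "y - y23 = of_real (p * r) * (x2 - x3)" unfolding y_def y23_def by simp
  have e3: "y - y13 = of_real (p * q) * (x3 - x1)" unfolding y_def y13_def by simp
  have e4: "y13 - y12 = of_real (q * (p + q + r)) * (x1 - x4)"
    unfolding y13_def y12_def p_def q_def r_def
    by (simp add: complex_eq_iff) algebra
  have e5: "y12 - y23 = of_real (r * (p + q + r)) * (x2 - x4)"
    unfolding y23_def y12_def p_def q_def r_def
    by (simp add: complex_eq_iff) algebra
  have e6: "y23 - y13 = of_real (p * (p + q + r)) * (x3 - x4)"
    unfolding y23_def y13_def p_def q_def r_def
    by (simp add: complex_eq_iff) algebra
  have dy: "distinct [y23,y13,y12,y]"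
  proof -
    have "y - y12 \<noteq> 0" unfolding e1 using dx p0 q0 r0 by simp
    moreover have "y - y23 \<noteq> 0" unfolding e2 using dx p0 q0 r0 by simp
    moreover have "y - y13 \<noteq> 0" unfolding e3 using dx p0 q0 r0 by auto
    moreover have "y13 - y12 \<noteq> 0" unfolding e4 using dx p0 q0 r0 A0 by (simp del: of_real_add)
    moreover have "y12 - y23 \<noteq> 0" unfolding e5 using dx p0 q0 r0 A0 by (simp del: of_real_add)
    moreover have "y23 - y13 \<noteq> 0" unfolding e6 using dx p0 q0 r0 A0 by (simp del: of_real_add)
    ultimately show ?thesis by auto
  qed
  show ?thesis using dx dy par_of_real[OF e1] par_of_real[OF e2] par_of_real[OF e3]
    par_of_real[OF e4] par_of_real[OF e5] par_of_real[OF e6] by simp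
qed

lemma recip_exists:
  assumes nr: "Im Qv \<noteq> 0"
  shows "\<exists>x1 x2 x3 x4 y23 y13 y12 y. distinct [x1,x2,x3,x4] \<and> distinct [y23,y13,y12,y] \<and>
     cross_ratio x1 x2 x3 x4 = Qv \<and> cross_ratio y23 y13 y12 y = Qv \<and>
     parallel_seg x1 x2 y y12 \<and> parallel_seg x2 x3 y y23 \<and>
     parallel_seg x3 x1 y y13 \<and> parallel_seg x1 x4 y13 y12 \<and>
     parallel_seg x2 x4 y12 y23 \<and> parallel_seg x3 x4 y23 y13"
proof -
  define x1 where "x1 = 3 * (2 * Qv - 1)"
  define x2 where "x2 = 3 * (Qv * Qv - 1)"
  define x3 where "x3 = (Qv + 1) * (2 * Qv - 1)"
  define x4 :: complex where "x4 = 0"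
  define a where "a = Re Qv"
  define b where "b = Im Qv"
  have b0: "b \<noteq> 0" using nr b_def by simp
  have p: "Im (cnj (x1 - x4) * (x2 - x4)) = 18 * b * (a*a + b*b - a + 1)"
    unfolding x1_def x2_def x4_def a_def b_def by simp algebra
  have q: "Im (cnj (x2 - x4) * (x3 - x4)) = - 3 * b * ((a+1)*(a+1) + b*b)"
    unfolding x2_def x3_def x4_def a_def b_def by simp algebra
  have r: "Im (cnj (x3 - x4) * (x1 - x4)) = - 3 * b * ((2*a-1)*(2*a-1) + 4*b*b)"
    unfolding x1_def x3_def x4_def a_def b_def by simp algebra
  have sq: "0 \<le> (x::real) * x" for x by simp
  have bb: "b * b > 0" using b0 not_real_square_gt_zero by blast
  have pos1: "a*a + b*b - a + 1 > 0"
  proof -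
    have "a*a + b*b - a + 1 = (a - 1/2)*(a - 1/2) + b*b + 3/4" by algebra
    then show ?thesis using sq[of "a - 1/2"] bb by linarith
  qed
  have pos2: "(a+1)*(a+1) + b*b > 0" using sq[of "a+1"] bb by linarith
  have pos3: "(2*a-1)*(2*a-1) + 4*b*b > 0" using sq[of "2*a-1"] bb by linarith
  have A: "18 * b * (a*a + b*b - a + 1) + - 3 * b * ((a+1)*(a+1) + b*b) + - 3 * b * ((2*a-1)*(2*a-1) + 4*b*b)
       = 3 * b * ((a-2)*(a-2) + b*b)" by algebra
  have pos4: "(a-2)*(a-2) + b*b > 0" using sq[of "a-2"] bb by linarith
  let ?p = "Im (cnj (x1 - x4) * (x2 - x4))"
  let ?q = "Im (cnj (x2 - x4) * (x3 - x4))"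
  let ?r = "Im (cnj (x3 - x4) * (x1 - x4))"
  have p0: "?p \<noteq> 0" unfolding p using b0 pos1 by simp
  have q0: "?q \<noteq> 0" unfolding q using b0 pos2 by simp
  have r0: "?r \<noteq> 0" unfolding r using b0 pos3 by simp
  have A0: "?p + ?q + ?r \<noteq> 0" unfolding p q r A using b0 pos4 by simp
  define y :: complex where "y = 0"
  define y12 where "y12 = - of_real (?q * ?r) * (x1 - x2)"
  define y23 where "y23 = - of_real (?p * ?r) * (x2 - x3)"
  define y13 where "y13 = - of_real (?p * ?q) * (x3 - x1)"
  have C: "distinct [x1,x2,x3,x4] \<and> distinct [y23,y13,y12,y] \<and>
     parallel_seg x1 x2 y y12 \<and> parallel_seg x2 x3 y y23 \<and>
     parallel_seg x3 x1 y y13 \<and> parallel_seg x1 x4 y13 y12 \<and>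
     parallel_seg x2 x4 y12 y23 \<and> parallel_seg x3 x4 y23 y13"
    unfolding y_def y12_def y23_def y13_def by (rule construct[OF p0 q0 r0 A0])
  have crx: "cross_ratio x1 x2 x3 x4 = Qv"
  proof -
    have n: "(x1 - x2) * (x3 - x4) = Qv * (3 * (2 - Qv) * ((Qv + 1) * (2 * Qv - 1)))"
      unfolding x1_def x2_def x3_def x4_def by algebra
    have m: "(x2 - x3) * (x4 - x1) = 3 * (2 - Qv) * ((Qv + 1) * (2 * Qv - 1))"
      unfolding x1_def x2_def x3_def x4_def by algebra
    have "2 - Qv \<noteq> 0" "Qv + 1 \<noteq> 0" "2 * Qv - 1 \<noteq> 0" using nr
      by (auto simp: complex_eq_iff)
    then have "3 * (2 - Qv) * ((Qv + 1) * (2 * Qv - 1)) \<noteq> 0" by simp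
    then show ?thesis unfolding cross_ratio_def n m by (rule nonzero_mult_div_cancel_right)
  qed
  have cry: "cross_ratio y23 y13 y12 y = Qv"
    using core[of x1 x2 x3 x4 y23 y13 y12 y] C crx nr by simp
  show ?thesis using C crx cry by blast
qed



theorem theorem2:
  fixes P1 P2 P3 P123 F23 F13 F12 F :: complex
  assumes "distinct [P1, P2, P3, P123]"
    and "distinct [F23, F13, F12, F]"
    and "Im (cross_ratio P1 P2 P3 P123) \<noteq> 0"
    and "Im (cross_ratio F23 F13 F12 F) \<noteq> 0"
  shows "reciprocal_46 P1 P2 P3 P123 F23 F13 F12 F \<longleftrightarrow>
         cross_ratio P1 P2 P3 P123 = cross_ratio F23 F13 F12 F"
proof
  assume "reciprocal_46 P1 P2 P3 P123 F23 F13 F12 F"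
  then obtain a b c d a' b' c' d' u where nd: "moebius_nondeg a b c d" and nd': "moebius_nondeg a' b' c' d'"
    and u: "norm u = 1" and pc: "\<forall>z\<in>{P1, P2, P3, P123}. c * z + d \<noteq> 0"
    and pc': "\<forall>z\<in>{F23, F13, F12, F}. c' * z + d' \<noteq> 0"
    and par: "parallel_seg (u * moebius a b c d P1) (u * moebius a b c d P2) (moebius a' b' c' d' F) (moebius a' b' c' d' F12) \<and>
           parallel_seg (u * moebius a b c d P2) (u * moebius a b c d P3) (moebius a' b' c' d' F) (moebius a' b' c' d' F23) \<and>
           parallel_seg (u * moebius a b c d P3) (u * moebius a b c d P1) (moebius a' b' c' d' F) (moebius a' b' c' d' F13) \<and>
           parallel_seg (u * moebius a b c d P1) (u * moebius a b c d P123) (moebius a' b' c' d' F13) (moebius a' b' c' d' F12) \<and>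
           parallel_seg (u * moebius a b c d P2) (u * moebius a b c d P123) (moebius a' b' c' d' F12) (moebius a' b' c' d' F23) \<and>
           parallel_seg (u * moebius a b c d P3) (u * moebius a b c d P123) (moebius a' b' c' d' F23) (moebius a' b' c' d' F13)"
    unfolding reciprocal_46_def Let_def by blast
  have um: "u * moebius a b c d z = moebius (u*a) (u*b) c d z" for z
    unfolding moebius_def by (simp add: algebra_simps)
  have u0: "u \<noteq> 0" using u by auto
  have nd2: "moebius_nondeg (u*a) (u*b) c d" using nd u0 unfolding moebius_nondeg_def
    by (metis mult.assoc mult_eq_0_iff right_diff_distrib)
  let ?M = "moebius (u*a) (u*b) c d"
  let ?N = "moebius a' b' c' d'"
  have dx: "distinct [?M P1, ?M P2, ?M P3, ?M P123]"
    using moeb_inj[OF nd2] pc assms(1) by simp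
  have dy: "distinct [?N F23, ?N F13, ?N F12, ?N F]"
    using moeb_inj[OF nd'] pc' assms(2) by simp
  have crx: "cross_ratio (?M P1) (?M P2) (?M P3) (?M P123) = cross_ratio P1 P2 P3 P123"
    using moeb_cr[OF nd2] pc by simp
  have cry: "cross_ratio (?N F23) (?N F13) (?N F12) (?N F) = cross_ratio F23 F13 F12 F"
    using moeb_cr[OF nd'] pc' by simp
  have "cross_ratio (?M P1) (?M P2) (?M P3) (?M P123) = cross_ratio (?N F23) (?N F13) (?N F12) (?N F)"
    apply (rule core)
    using dx dy crx assms(3) par unfolding um by simp_all
  then show "cross_ratio P1 P2 P3 P123 = cross_ratio F23 F13 F12 F" using crx cry by simp
next
  assume eq: "cross_ratio P1 P2 P3 P123 = cross_ratio F23 F13 F12 F"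
  obtain x1 x2 x3 x4 y23 y13 y12 y where dx: "distinct [x1,x2,x3,x4]" and dy: "distinct [y23,y13,y12,y]"
     and crx: "cross_ratio x1 x2 x3 x4 = cross_ratio P1 P2 P3 P123"
     and cry: "cross_ratio y23 y13 y12 y = cross_ratio P1 P2 P3 P123"
     and par: "parallel_seg x1 x2 y y12 \<and> parallel_seg x2 x3 y y23 \<and>
     parallel_seg x3 x1 y y13 \<and> parallel_seg x1 x4 y13 y12 \<and>
     parallel_seg x2 x4 y12 y23 \<and> parallel_seg x3 x4 y23 y13"
    using recip_exists[OF assms(3)] by blast
  obtain a b c d where m1: "moebius_nondeg a b c d" "\<forall>z\<in>{P1,P2,P3,P123}. c*z+d \<noteq> 0"
     "moebius a b c d P1 = x1" "moebius a b c d P2 = x2" "moebius a b c d P3 = x3" "moebius a b c d P123 = x4"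
    using moeb_exists[OF assms(1) dx] crx by metis
  obtain a' b' c' d' where m2: "moebius_nondeg a' b' c' d'" "\<forall>z\<in>{F23,F13,F12,F}. c'*z+d' \<noteq> 0"
     "moebius a' b' c' d' F23 = y23" "moebius a' b' c' d' F13 = y13" "moebius a' b' c' d' F12 = y12" "moebius a' b' c' d' F = y"
    using moeb_exists[OF assms(2) dy] cry eq by metis
  show "reciprocal_46 P1 P2 P3 P123 F23 F13 F12 F"
    unfolding reciprocal_46_def Let_def
    apply (rule exI[of _ a], rule exI[of _ b], rule exI[of _ c], rule exI[of _ d])
    apply (rule exI[of _ a'], rule exI[of _ b'], rule exI[of _ c'], rule exI[of _ d'], rule exI[of _ 1])
    using m1 m2 par by simp
qed

end
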